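(* Let $\mathcal H_A,\mathcal H_B$ be finite-dimensional complex Hilbert spaces and let $\rho$ be a separable density matrix on $\mathcal H_A\otimes\mathcal H_B$. Let $\rho^{T_B}=(\mathbf 1_A\otimes T)\rho$, where $T$ is transposition in a chosen basis of $\mathcal H_B$. Then $\mathcal L_{\mathcal E}(\rho)=\mathcal L_{\mathcal E}(\rho^{T_B})$.
   Context: $\rho$ is separable if $\rho=\sum_i p_i\,|\psi_i\rangle\langle\psi_i|\otimes|\phi_i\rangle\langle\phi_i|$ with $p_i>0$ and unit vectors $\psi_i\in\mathcal H_A,\phi_i\in\mathcal H_B$ (a separable decomposition). For a separable $\rho$, the optimal ensemble cardinality $\mathcal L_{\mathcal E}(\rho)$ is the least number of distinct pure product states needed in a separable decomposition of $\rho$. *)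

theory Defs
  imports "HOL-Analysis.Analysis"
begin

text \<open>H_A = C^'a, H_B = C^'b with finite index types 'a, 'b (standard bases);
H_A (x) H_B = C^('a \<times> 'b). Operators on it are matrices indexed by pairs.\<close>

type_synonym ('a, 'b) bop = "complex ^ ('a \<times> 'b) ^ ('a \<times> 'b)"

definition unit_vec :: "complex ^ 'n::finite \<Rightarrow> bool" where
  "unit_vec v \<longleftrightarrow> (\<Sum>i\<in>UNIV. (cmod (v $ i))\<^sup>2) = 1"

text \<open>The operator |psi><psi| (x) |phi><phi|.\<close>
definition prod_proj :: "complex ^ 'a::finite \<Rightarrow> complex ^ 'b::finite \<Rightarrow> ('a, 'b) bop" where
  "prod_proj \<psi> \<phi> = (\<chi> x y. \<psi> $ fst x * cnj (\<psi> $ fst y) * \<phi> $ snd x * cnj (\<phi> $ snd y))"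

definition pure_product_states :: "('a::finite, 'b::finite) bop set" where
  "pure_product_states = {prod_proj \<psi> \<phi> | \<psi> \<phi>. unit_vec \<psi> \<and> unit_vec \<phi>}"

definition sep_decomp :: "('a::finite, 'b::finite) bop \<Rightarrow> ('a, 'b) bop set \<Rightarrow> (('a, 'b) bop \<Rightarrow> real) \<Rightarrow> bool" where
  "sep_decomp \<rho> S p \<longleftrightarrow> finite S \<and> S \<subseteq> pure_product_states \<and> (\<forall>s\<in>S. p s > 0)
     \<and> \<rho> = (\<Sum>s\<in>S. p s *\<^sub>R s)"

definition separable :: "('a::finite, 'b::finite) bop \<Rightarrow> bool" where
  "separable \<rho> \<longleftrightarrow> (\<exists>S p. sep_decomp \<rho> S p)"

definition ens_card :: "('a::finite, 'b::finite) bop \<Rightarrow> nat" where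
  "ens_card \<rho> = (LEAST n. \<exists>S p. sep_decomp \<rho> S p \<and> card S = n)"

definition trace_op :: "complex ^ 'n::finite ^ 'n \<Rightarrow> complex" where
  "trace_op M = (\<Sum>i\<in>UNIV. M $ i $ i)"

text \<open>Density matrix: positive semidefinite (over C, hence Hermitian) with trace 1.\<close>
definition density_matrix :: "complex ^ 'n::finite ^ 'n \<Rightarrow> bool" where
  "density_matrix M \<longleftrightarrow> trace_op M = 1 \<and>
     (\<forall>v. let q = (\<Sum>i\<in>UNIV. \<Sum>j\<in>UNIV. cnj (v $ i) * M $ i $ j * v $ j) in Im q = 0 \<and> Re q \<ge> 0)"

definition partial_transpose_B :: "('a::finite, 'b::finite) bop \<Rightarrow> ('a, 'b) bop" where
  "partial_transpose_B \<rho> = (\<chi> x y. \<rho> $ (fst x, snd y) $ (fst y, snd x))"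

end

theory Submission
  imports Defs
begin

abbreviation PT :: "('a::finite, 'b::finite) bop \<Rightarrow> ('a, 'b) bop" where
  "PT \<equiv> partial_transpose_B"

lemma PT_PT[simp]: "PT (PT s) = s"
  by (simp add: partial_transpose_B_def vec_eq_iff)

lemma PT_inj: "inj PT"
  by (metis PT_PT injI)

lemma PT_add: "PT (a + b) = PT a + PT b"
  by (simp add: partial_transpose_B_def vec_eq_iff)

lemma PT_scale: "PT (c *\<^sub>R a) = c *\<^sub>R PT a"
  by (simp add: partial_transpose_B_def vec_eq_iff)

lemma PT_zero: "PT 0 = 0"
  by (simp add: partial_transpose_B_def vec_eq_iff)

lemma PT_sum: "PT (\<Sum>s\<in>S. p s *\<^sub>R s) = (\<Sum>s\<in>S. p s *\<^sub>R PT s)"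
  by (induction S rule: infinite_finite_induct) (simp_all add: PT_zero PT_add PT_scale)

lemma PT_prod_proj: "PT (prod_proj \<psi> \<phi>) = prod_proj \<psi> ((\<chi> i. cnj (\<phi> $ i)))"
  by (simp add: partial_transpose_B_def prod_proj_def vec_eq_iff mult_ac)

lemma unit_vec_cnj: "unit_vec \<phi> \<Longrightarrow> unit_vec ((\<chi> i. cnj (\<phi> $ i)))"
  by (simp add: unit_vec_def)

lemma PT_pure: "s \<in> pure_product_states \<Longrightarrow> PT s \<in> pure_product_states"
  unfolding pure_product_states_def using PT_prod_proj unit_vec_cnj by blast

lemma decomp_PT:
  assumes "sep_decomp \<sigma> S p"
  shows "sep_decomp (PT \<sigma>) (PT ` S) (p \<circ> PT) \<and> card (PT ` S) = card S"
proof -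
  have inj: "inj_on PT S" using PT_inj inj_on_subset by blast
  have "(\<Sum>t\<in>PT ` S. (p \<circ> PT) t *\<^sub>R t) = (\<Sum>s\<in>S. (p \<circ> PT) (PT s) *\<^sub>R PT s)"
    by (rule sum.reindex[OF inj, unfolded comp_def])
  also have "\<dots> = PT \<sigma>" using assms by (simp add: sep_decomp_def PT_sum)
  finally show ?thesis using assms inj PT_pure card_image
    unfolding sep_decomp_def by auto
qed

lemma card_set_sub:
  "{n. \<exists>S p. sep_decomp \<sigma> S p \<and> card S = n} \<subseteq> {n. \<exists>S p. sep_decomp (PT \<sigma>) S p \<and> card S = n}"
  using decomp_PT by blast

theorem lemma1:
  fixes \<rho> :: "('a::finite, 'b::finite) bop"
  assumes "density_matrix \<rho>" and "separable \<rho>"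
  shows "ens_card \<rho> = ens_card (partial_transpose_B \<rho>)"
proof -
  have "{n. \<exists>S p. sep_decomp \<rho> S p \<and> card S = n} = {n. \<exists>S p. sep_decomp (PT \<rho>) S p \<and> card S = n}"
    using card_set_sub[of \<rho>] card_set_sub[of "PT \<rho>"] by simp
  then show ?thesis unfolding ens_card_def by (simp add: set_eq_iff)
qed

end
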